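(* In the local volatility model without jumps ($\lambda=0$), the first-order term of the expansion is $$G^1(t,x;T,y)=J^1(t,T,x)G^0(t,x;T,y),\qquad J^1(t,T,x)=\int_t^T\alpha_1(s)V_{t,s,x}\,ds\,(\partial_{xx}-\partial_x),$$ where $V_{t,T,x}f(x)=\big(x-\bar x+(T-t)r-\frac12A(t,T)\big)f(x)+A(t,T)\partial_xf(x)$.
   Context: Model: $dX(t)=(r-\frac{\sigma^2(t,X(t))}2)dt+\sigma(t,X(t))dW(t)$. With $a=\sigma^2$ and a basepoint $\bar x$: $\alpha_0(t)=a(t,\bar x)$, $\alpha_1(t)=\frac12\partial_xa(t,\bar x)$, $A(t,T)=\int_t^T\alpha_0(s)ds$. $L_0=\frac{\alpha_0(t)}2(\partial_{xx}-\partial_x)+r\partial_x+\partial_t$ with Gaussian fundamental solution $G^0(t,x;T,y)=(2\pi A(t,T))^{-1/2}\exp\big(-\frac{(x-y+(T-t)r-\frac12A(t,T))^2}{2A(t,T)}\big)$. $G^1(\cdot,\cdot;T,y)$ is the solution of $L_0G^1=-\alpha_1(t)(x-\bar x)(\partial_{xx}-\partial_x)G^0$ on $(0,T)\times\mathbb R$ with $G^1(T,x;T,y)=0$. *)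

theory Defs
  imports "HOL-Analysis.Analysis"
begin

text \<open>Local volatility model without jumps. The squared volatility is a(t,x) = sigma(t,x)^2;
  xb is the basepoint \<open>x bar\<close>, r the interest rate.\<close>

definition alpha0 :: "(real \<Rightarrow> real \<Rightarrow> real) \<Rightarrow> real \<Rightarrow> real \<Rightarrow> real" where
  "alpha0 a xb t = a t xb"

definition alpha1 :: "(real \<Rightarrow> real \<Rightarrow> real) \<Rightarrow> real \<Rightarrow> real \<Rightarrow> real" where
  "alpha1 a xb t = deriv (\<lambda>x. a t x) xb / 2"

definition AA :: "(real \<Rightarrow> real \<Rightarrow> real) \<Rightarrow> real \<Rightarrow> real \<Rightarrow> real \<Rightarrow> real" where
  "AA a xb t T = integral {t..T} (alpha0 a xb)"

definition pdt :: "(real \<Rightarrow> real \<Rightarrow> real) \<Rightarrow> real \<Rightarrow> real \<Rightarrow> real" where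
  "pdt u t x = deriv (\<lambda>s. u s x) t"

definition pdx :: "(real \<Rightarrow> real \<Rightarrow> real) \<Rightarrow> real \<Rightarrow> real \<Rightarrow> real" where
  "pdx u t x = deriv (\<lambda>z. u t z) x"

definition pdxx :: "(real \<Rightarrow> real \<Rightarrow> real) \<Rightarrow> real \<Rightarrow> real \<Rightarrow> real" where
  "pdxx u t x = pdx (pdx u) t x"

definition G0 :: "(real \<Rightarrow> real \<Rightarrow> real) \<Rightarrow> real \<Rightarrow> real \<Rightarrow> real \<Rightarrow> real \<Rightarrow> real \<Rightarrow> real \<Rightarrow> real" where
  "G0 a xb r t x T y =
     exp (- ((x - y + (T - t) * r - AA a xb t T / 2)\<^sup>2) / (2 * AA a xb t T))
       / sqrt (2 * pi * AA a xb t T)"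

definition L0 :: "(real \<Rightarrow> real \<Rightarrow> real) \<Rightarrow> real \<Rightarrow> real \<Rightarrow> (real \<Rightarrow> real \<Rightarrow> real) \<Rightarrow> real \<Rightarrow> real \<Rightarrow> real" where
  "L0 a xb r u t x = alpha0 a xb t / 2 * (pdxx u t x - pdx u t x) + r * pdx u t x + pdt u t x"

definition H0 :: "(real \<Rightarrow> real \<Rightarrow> real) \<Rightarrow> real \<Rightarrow> real \<Rightarrow> real \<Rightarrow> real \<Rightarrow> real \<Rightarrow> real \<Rightarrow> real" where
  "H0 a xb r T y t x = pdxx (\<lambda>t x. G0 a xb r t x T y) t x - pdx (\<lambda>t x. G0 a xb r t x T y) t x"

definition Vop :: "(real \<Rightarrow> real \<Rightarrow> real) \<Rightarrow> real \<Rightarrow> real \<Rightarrow> real \<Rightarrow> real \<Rightarrow> (real \<Rightarrow> real) \<Rightarrow> real \<Rightarrow> real" where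
  "Vop a xb r t s f x = (x - xb + (s - t) * r - AA a xb t s / 2) * f x + AA a xb t s * deriv f x"

definition J1G0 :: "(real \<Rightarrow> real \<Rightarrow> real) \<Rightarrow> real \<Rightarrow> real \<Rightarrow> real \<Rightarrow> real \<Rightarrow> real \<Rightarrow> real \<Rightarrow> real" where
  "J1G0 a xb r T y t x =
     integral {t..T} (\<lambda>s. alpha1 a xb s * Vop a xb r t s (\<lambda>z. H0 a xb r T y t z) x)"

text \<open>u solves the problem defining G^1(.,.;T,y):
  L_0 u = - alpha1(t) (x - xb) (d_xx - d_x) G^0 on (0,T) x R, with u(T,x) = 0
  (terminal condition understood as the limit t -> T-, off the pole x = y).\<close>
definition is_G1 :: "(real \<Rightarrow> real \<Rightarrow> real) \<Rightarrow> real \<Rightarrow> real \<Rightarrow> real \<Rightarrow> real \<Rightarrow> (real \<Rightarrow> real \<Rightarrow> real) \<Rightarrow> bool" where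
  "is_G1 a xb r T y u \<longleftrightarrow>
     (\<forall>t\<in>{0<..<T}. \<forall>x.
        (\<lambda>s. u s x) differentiable (at t) \<and>
        (\<lambda>z. u t z) differentiable (at x) \<and>
        (\<lambda>z. pdx u t z) differentiable (at x) \<and>
        L0 a xb r u t x = - alpha1 a xb t * (x - xb) * H0 a xb r T y t x) \<and>
     (\<forall>x. x \<noteq> y \<longrightarrow> ((\<lambda>t. u t x) \<longlongrightarrow> 0) (at_left T))"

end

theory Submission
  imports Defs "HOL-Real_Asymp.Real_Asymp"
begin

definition k0 :: "real \<Rightarrow> real \<Rightarrow> real" where
  "k0 A z = exp (- (z\<^sup>2) / (2 * A)) / sqrt (2 * pi * A)"

fun pp :: "nat \<Rightarrow> real \<Rightarrow> real \<Rightarrow> real" where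
  "pp 0 A z = 1"
| "pp (Suc 0) A z = - (z / A)"
| "pp (Suc (Suc 0)) A z = z^2/A^2 - 1/A"
| "pp (Suc (Suc (Suc 0))) A z = - (z^3/A^3) + 3*z/A^2"
| "pp (Suc (Suc (Suc (Suc 0)))) A z = z^4/A^4 - 6*z^2/A^3 + 3/A^2"
| "pp (Suc (Suc (Suc (Suc (Suc 0))))) A z = - (z^5/A^5) + 10*z^3/A^4 - 15*z/A^3"
| "pp (Suc (Suc (Suc (Suc (Suc (Suc 0)))))) A z = z^6/A^6 - 15*z^4/A^5 + 45*z^2/A^4 - 15/A^3"
| "pp _ A z = 0"

definition kk :: "nat \<Rightarrow> real \<Rightarrow> real \<Rightarrow> real" where
  "kk n A z = pp n A z * k0 A z"

lemma k0_aux: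
  fixes q A E X Ad :: real
  assumes "q > 0" "q * q = 2*pi*A" "A > 0"
  shows "(E * X * q - E * (inverse q / 2 * (2*pi*Ad))) / (q*q) = E / q * (X - 1 / (2*A) * Ad)"
proof -
  have "(E * X * q - E * (inverse q / 2 * (2*pi*Ad))) / (q*q) = E * X / q - E * pi * Ad / (q * (q*q))"
    using assms by (simp add: field_simps)
  also have "\<dots> = E / q * (X - 1 / (2*A) * Ad)" unfolding assms(2) using assms by (simp add: field_simps)
  finally show ?thesis .
qed

lemma k0_deriv:
  assumes "(Af has_real_derivative Ad) (at t)" "(zf has_real_derivative zd) (at t)" "Af t > 0"
  shows "((\<lambda>s. k0 (Af s) (zf s)) has_real_derivative
     k0 (Af t) (zf t) * ((zf t ^ 2 / (2 * Af t ^ 2) - 1 / (2 * Af t)) * Ad - zf t / Af t * zd)) (at t)"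
proof -
  have s: "((\<lambda>s. sqrt (2*pi*Af s)) has_real_derivative inverse (sqrt (2*pi*Af t)) / 2 * (2*pi*Ad)) (at t)"
    by (rule DERIV_chain2[OF DERIV_real_sqrt]) (auto intro!: derivative_eq_intros assms simp: assms(3))
  have e: "((\<lambda>s. exp (- ((zf s)^2)/(2*Af s))) has_real_derivative
      exp (- ((zf t)^2)/(2*Af t)) * ((zf t ^ 2 / (2 * Af t ^ 2)) * Ad - zf t / Af t * zd)) (at t)"
    using assms(3) by (auto intro!: derivative_eq_intros assms simp: field_simps power2_eq_square)
  have "((\<lambda>s. exp (- ((zf s)^2)/(2*Af s)) / sqrt (2*pi*Af s)) has_real_derivative
     (exp (- ((zf t)^2)/(2*Af t)) * ((zf t ^ 2 / (2 * Af t ^ 2)) * Ad - zf t / Af t * zd) * sqrt (2*pi*Af t)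
      - exp (- ((zf t)^2)/(2*Af t)) * (inverse (sqrt (2*pi*Af t)) / 2 * (2*pi*Ad))) / (sqrt (2*pi*Af t) * sqrt (2*pi*Af t))) (at t)"
    using assms(3) by (intro DERIV_divide e s) simp
  moreover have "sqrt (2*pi*Af t) * sqrt (2*pi*Af t) = 2*pi*Af t" using assms(3) by simp
  moreover have "sqrt (2*pi*Af t) > 0" using assms(3) by simp
  ultimately show ?thesis unfolding k0_def
    apply (elim DERIV_cong)
    apply (subst k0_aux)
    using assms(3) by (auto simp: algebra_simps)
qed

lemma k0_deriv':
  assumes "(Af has_real_derivative Ad) (at t)" "(zf has_real_derivative zd) (at t)" "Af t > 0"
   "D = k0 (Af t) (zf t) * ((zf t ^ 2 / (2 * Af t ^ 2) - 1 / (2 * Af t)) * Ad - zf t / Af t * zd)"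
  shows "((\<lambda>s. k0 (Af s) (zf s)) has_real_derivative D) (at t)"
  using k0_deriv[OF assms(1-3)] assms(4) by simp

lemma kk_deriv:
  assumes "(Af has_real_derivative Ad) (at t)" "(zf has_real_derivative zd) (at t)" "Af t > 0" "n \<le> 4"
  shows "((\<lambda>s. kk n (Af s) (zf s)) has_real_derivative
     kk (n+2) (Af t) (zf t) * Ad / 2 + kk (Suc n) (Af t) (zf t) * zd) (at t)"
proof -
  have "n = 0 \<or> n = 1 \<or> n = 2 \<or> n = 3 \<or> n = 4" using assms(4) by auto
  then show ?thesis
    using assms(3)
    by (elim disjE) (auto simp: kk_def numeral_eq_Suc intro!: derivative_eq_intros k0_deriv' assms(1,2),
       simp_all add: field_simps power2_eq_square power3_eq_cube)
qed

lemma g_lim: fixes b :: real and j :: nat assumes "b > 0"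
  shows "((\<lambda>w. w ^ j * sqrt w * exp (- (b * w))) \<longlongrightarrow> 0) at_top"
  using assms by real_asymp

lemma mono_lim:
  fixes Af zf :: "'a \<Rightarrow> real"
  assumes A0: "(Af \<longlongrightarrow> 0) F" and Apos: "eventually (\<lambda>t. Af t > 0) F"
    and zc: "(zf \<longlongrightarrow> c) F" and c: "c \<noteq> 0"
  shows "((\<lambda>t. zf t ^ i / Af t ^ j * k0 (Af t) (zf t)) \<longlongrightarrow> 0) F"
proof -
  define b where "b = c^2/4"
  have b: "b > 0" using c by (simp add: b_def)
  have "filterlim Af (at_right 0) F"
    by (rule tendsto_imp_filterlim_at_right[OF A0 Apos])
  then have w: "filterlim (\<lambda>t. inverse (Af t)) at_top F"
    using filterlim_compose filterlim_inverse_at_top_right by blast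
  have g: "((\<lambda>t. (inverse (Af t)) ^ j * sqrt (inverse (Af t)) * exp (- (b * inverse (Af t)))) \<longlongrightarrow> 0) F"
    using filterlim_compose[OF g_lim[OF b] w] .
  have z2: "((\<lambda>t. (zf t)^2) \<longlongrightarrow> c^2) F" using zc by (intro tendsto_intros)
  have "c^2/2 < c^2" using c by simp
  then have evz: "eventually (\<lambda>t. (zf t)^2 > c^2/2) F" using order_tendstoD(1)[OF z2] by blast
  have ev: "eventually (\<lambda>t. 0 \<le> 1 / Af t ^ j * k0 (Af t) (zf t) \<and>
      1 / Af t ^ j * k0 (Af t) (zf t) \<le> (inverse (Af t)) ^ j * sqrt (inverse (Af t)) * exp (- (b * inverse (Af t))) / sqrt (2*pi)) F"
    using evz Apos
  proof eventually_elim
    case (elim t)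
    let ?A = "Af t" and ?z = "zf t"
    have k0e: "k0 ?A ?z = exp (- (?z^2 * inverse ?A / 2)) * sqrt (inverse ?A) / sqrt (2*pi)"
      unfolding k0_def using elim by (simp add: real_sqrt_mult real_sqrt_inverse field_simps real_sqrt_divide)
    have "exp (- (?z^2 * inverse ?A / 2)) \<le> exp (- (b * inverse ?A))"
      using elim by (auto simp: b_def intro!: mult_right_mono)
    then have "1 / ?A ^ j * k0 ?A ?z \<le> (inverse ?A) ^ j * sqrt (inverse ?A) * exp (- (b * inverse ?A)) / sqrt (2*pi)"
      unfolding k0e using elim
      by (simp add: power_one_over divide_right_mono mult_left_mono inverse_eq_divide mult_ac)
    moreover have "0 \<le> 1 / ?A ^ j * k0 ?A ?z" unfolding k0_def using elim by simp
    ultimately show ?case by simp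
  qed
  have g2: "((\<lambda>t. (inverse (Af t)) ^ j * sqrt (inverse (Af t)) * exp (- (b * inverse (Af t))) / sqrt (2*pi)) \<longlongrightarrow> 0) F"
    using tendsto_divide[OF g tendsto_const, of "sqrt (2*pi)"] by simp
  have h: "((\<lambda>t. 1 / Af t ^ j * k0 (Af t) (zf t)) \<longlongrightarrow> 0) F"
    by (rule tendsto_sandwich[OF _ _ tendsto_const g2]) (use ev in \<open>auto elim: eventually_mono\<close>)
  have "((\<lambda>t. zf t ^ i * (1 / Af t ^ j * k0 (Af t) (zf t))) \<longlongrightarrow> c ^ i * 0) F"
    by (intro tendsto_intros zc h)
  then show ?thesis by simp
qed

lemma kk_lim:
  fixes Af zf :: "'a \<Rightarrow> real"
  assumes A0: "(Af \<longlongrightarrow> 0) F" and Apos: "eventually (\<lambda>t. Af t > 0) F"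
    and zc: "(zf \<longlongrightarrow> c) F" and c: "c \<noteq> 0" and n: "n \<in> {1,2,3}"
  shows "((\<lambda>t. kk n (Af t) (zf t)) \<longlongrightarrow> 0) F"
proof -
  note m = mono_lim[OF A0 Apos zc c]
  have e1: "\<And>A z. kk 1 A z = - (z^1/A^1 * k0 A z)" by (simp add: kk_def)
  have e2: "\<And>A z. kk 2 A z = z^2/A^2 * k0 A z - z^0/A^1 * k0 A z" by (simp add: kk_def numeral_eq_Suc algebra_simps)
  have e3: "\<And>A z. kk 3 A z = - (z^3/A^3 * k0 A z) + 3 * (z^1/A^2 * k0 A z)"
    by (simp add: kk_def numeral_eq_Suc algebra_simps)
  have l1: "((\<lambda>t. kk 1 (Af t) (zf t)) \<longlongrightarrow> 0) F"
    unfolding e1 using tendsto_minus[OF m[of 1 1]] by simp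
  have l2: "((\<lambda>t. kk 2 (Af t) (zf t)) \<longlongrightarrow> 0) F"
    unfolding e2 using tendsto_diff[OF m[of 2 2] m[of 0 1]] by simp
  have l3: "((\<lambda>t. kk 3 (Af t) (zf t)) \<longlongrightarrow> 0) F"
    unfolding e3 using tendsto_add[OF tendsto_minus[OF m[of 3 3]] tendsto_mult[OF tendsto_const m[of 1 2], of 3]] by simp
  show ?thesis using n l1 l2 l3 by auto
qed

lemma int_deriv:
  fixes g :: "real \<Rightarrow> real" and T t :: real
  assumes "continuous_on {0..T} g" "t \<in> {0<..<T}"
  shows "((\<lambda>u. integral {u..T} g) has_real_derivative - g t) (at t)"
proof -
  have "t \<in> interior {0..T}" using assms(2) by simp
  then have e: "at t within {0..T} = at t" by (rule at_within_interior)
  have "t \<in> {0..T}" using assms(2) by auto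
  from integral_has_real_derivative'[OF assms(1) this] show ?thesis unfolding e .
qed

lemma int_cont:
  fixes g :: "real \<Rightarrow> real" and T :: real
  assumes "continuous_on {0..T} g"
  shows "continuous_on {0..T} (\<lambda>u. integral {u..T} g)"
  unfolding continuous_on_eq_continuous_within
proof
  fix x assume "x \<in> {0..T}"
  then show "continuous (at x within {0..T}) (\<lambda>u. integral {u..T} g)"
    by (rule DERIV_continuous[OF integral_has_real_derivative'[OF assms]])
qed

lemma int_has:
  fixes g :: "real \<Rightarrow> real" and T t :: real
  assumes "continuous_on {0..T} g" "0 \<le> t" "t \<le> T"
  shows "(g has_integral integral {t..T} g) {t..T}"
proof -
  have "continuous_on {t..T} g" by (rule continuous_on_subset[OF assms(1)]) (use assms in auto)
  then show ?thesis by (intro integrable_integral integrable_continuous_interval)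
qed

lemma xderiv:
  assumes "c > 0" "n \<le> 4"
  shows "((\<lambda>x. kk n c (x + d)) has_real_derivative kk (Suc n) c (x + d)) (at x)"
proof -
  have "((\<lambda>x. x + d) has_real_derivative 1) (at x)" by (auto intro!: derivative_eq_intros)
  then show ?thesis using kk_deriv[of "\<lambda>_. c" 0 x "\<lambda>x. x + d" 1 n] assms by simp
qed

lemma pos_int:
  fixes g :: "real \<Rightarrow> real" and T t :: real
  assumes "continuous_on {0..T} g" "\<And>s. s \<in> {0..T} \<Longrightarrow> g s > 0" "0 \<le> t" "t < T"
  shows "integral {t..T} g > 0"
proof -
  have "integral {t..T} (\<lambda>_. 0::real) < integral {t..T} g"
    using assms by (intro integral_less_real) (auto intro: continuous_on_subset[OF assms(1)])
  then show ?thesis by simp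
qed

theorem mainTheorem11:
  fixes a :: "real \<Rightarrow> real \<Rightarrow> real" and xb r T y :: real
  assumes "T > 0"
    and "\<And>t. (\<lambda>x. a t x) differentiable (at xb)"
    and "\<And>t. t \<in> {0..T} \<Longrightarrow> a t xb > 0"
    and "continuous_on {0..T} (alpha0 a xb)"
    and "continuous_on {0..T} (alpha1 a xb)"
  shows "is_G1 a xb r T y (J1G0 a xb r T y)"
proof -
  note T = assms(1)
  define al0 where "al0 = alpha0 a xb"
  define al1 where "al1 = alpha1 a xb"
  have c0: "continuous_on {0..T} al0" using assms(4) by (simp add: al0_def)
  have c1: "continuous_on {0..T} al1" using assms(5) by (simp add: al1_def)
  have al0pos: "\<And>s. s \<in> {0..T} \<Longrightarrow> al0 s > 0" using assms(3) by (simp add: al0_def alpha0_def)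
  define Af where "Af t = AA a xb t T" for t
  have Af_eq: "Af = (\<lambda>t. integral {t..T} al0)" by (auto simp: Af_def AA_def al0_def)
  have Afc: "continuous_on {0..T} Af" unfolding Af_eq by (rule int_cont[OF c0])
  have Afd: "\<And>t. t \<in> {0<..<T} \<Longrightarrow> (Af has_real_derivative - al0 t) (at t)"
    unfolding Af_eq by (rule int_deriv[OF c0])
  have Apos: "\<And>t. 0 \<le> t \<Longrightarrow> t < T \<Longrightarrow> Af t > 0"
    unfolding Af_eq by (rule pos_int[OF c0 al0pos])
  have AT: "Af T = 0" by (simp add: Af_eq)
  have AAsplit: "\<And>t s. 0 \<le> t \<Longrightarrow> t \<le> s \<Longrightarrow> s \<le> T \<Longrightarrow> AA a xb t s = Af t - Af s"
  proof -
    fix t s :: real assume h: "0 \<le> t" "t \<le> s" "s \<le> T"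
    have "integral {t..s} al0 + integral {s..T} al0 = integral {t..T} al0"
    proof -
      have "al0 integrable_on {t..T}"
        by (intro integrable_continuous_interval continuous_on_subset[OF c0]) (use h in auto)
      then show ?thesis by (rule Henstock_Kurzweil_Integration.integral_combine[OF h(2,3)])
    qed
    then show "AA a xb t s = Af t - Af s" unfolding Af_eq AA_def al0_def by simp
  qed
  define dd where "dd t = - y + (T - t) * r - Af t / 2" for t
  define f1 where "f1 s = al1 s * (s * r + Af s / 2)" for s
  define f2 where "f2 s = al1 s * Af s" for s
  have cf1: "continuous_on {0..T} f1" unfolding f1_def by (intro continuous_intros c1 Afc) auto
  have cf2: "continuous_on {0..T} f2" unfolding f2_def by (intro continuous_intros c1 Afc)
  define I0 where "I0 t = integral {t..T} al1" for t
  define I1 where "I1 t = integral {t..T} f1" for t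
  define I2 where "I2 t = integral {t..T} f2" for t
  define M where "M t x = (x - xb - t*r - Af t/2) * I0 t + I1 t" for t x
  define Q where "Q t = Af t * I0 t - I2 t" for t
  define Hn where "Hn n t x = kk n (Af t) (x + dd t)" for n t x
  define U where "U t x = M t x * (Hn 2 t x - Hn 1 t x) + Q t * (Hn 3 t x - Hn 2 t x)" for t x
  define Ux where "Ux t x = I0 t * (Hn 2 t x - Hn 1 t x) + M t x * (Hn 3 t x - Hn 2 t x) + Q t * (Hn 4 t x - Hn 3 t x)" for t x
  define Uxx where "Uxx t x = 2 * I0 t * (Hn 3 t x - Hn 2 t x) + M t x * (Hn 4 t x - Hn 3 t x) + Q t * (Hn 5 t x - Hn 4 t x)" for t x
  have key: "\<And>t. t \<in> {0<..<T} \<Longrightarrow>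
     (\<forall>x. H0 a xb r T y t x = Hn 2 t x - Hn 1 t x) \<and> (\<forall>x. J1G0 a xb r T y t x = U t x)"
  proof -
    fix t :: real assume t: "t \<in> {0<..<T}"
    have At: "Af t > 0" using t Apos by auto
    have hx: "\<And>n x. n \<le> 4 \<Longrightarrow> ((\<lambda>z. Hn n t z) has_real_derivative Hn (Suc n) t x) (at x)"
      unfolding Hn_def using At by (rule xderiv)
    have G0eq: "(\<lambda>z. G0 a xb r t z T y) = Hn 0 t"
    proof
      fix x
      have e: "x - y + (T - t) * r - AA a xb t T / 2 = x + dd t" by (simp add: dd_def Af_def)
      show "G0 a xb r t x T y = Hn 0 t x"
        unfolding G0_def Hn_def kk_def k0_def e[symmetric] by (simp add: Af_def)
    qed
    have p1: "(\<lambda>z. pdx (\<lambda>t x. G0 a xb r t x T y) t z) = Hn 1 t"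
    proof
      fix x show "pdx (\<lambda>t x. G0 a xb r t x T y) t x = Hn 1 t x"
        unfolding pdx_def G0eq by (rule DERIV_imp_deriv) (use hx[of 0 x] in simp)
    qed
    have p2: "\<And>x. pdxx (\<lambda>t x. G0 a xb r t x T y) t x = Hn 2 t x"
      unfolding pdxx_def pdx_def[of "pdx (\<lambda>t x. G0 a xb r t x T y)"] p1
      by (rule DERIV_imp_deriv) (use hx[of 1] in \<open>simp add: numeral_eq_Suc\<close>)
    have H0eq: "(\<lambda>z. H0 a xb r T y t z) = (\<lambda>z. Hn 2 t z - Hn 1 t z)"
    proof
      fix x show "H0 a xb r T y t x = Hn 2 t x - Hn 1 t x"
        unfolding H0_def p2 using p1 by metis
    qed
    have Dh: "\<And>x. deriv (\<lambda>z. H0 a xb r T y t z) x = Hn 3 t x - Hn 2 t x"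
      unfolding H0eq by (rule DERIV_imp_deriv, intro DERIV_diff) (use hx[of 2] hx[of 1] in \<open>simp_all add: numeral_eq_Suc\<close>)
    have J: "J1G0 a xb r T y t x = U t x" for x
    proof -
      define H where "H = Hn 2 t x - Hn 1 t x"
      define Hx where "Hx = Hn 3 t x - Hn 2 t x"
      define K where "K = x - xb - t*r - Af t/2"
      have "J1G0 a xb r T y t x = integral {t..T} (\<lambda>s. al1 s * K * H + al1 s * Af t * Hx + f1 s * H - f2 s * Hx)"
        unfolding J1G0_def Vop_def Dh
      proof (rule integral_cong)
        fix s assume s: "s \<in> {t..T}"
        have e1: "AA a xb t s = Af t - Af s" using t s by (intro AAsplit) auto
        have e2: "H0 a xb r T y t x = Hn 2 t x - Hn 1 t x" using fun_cong[OF H0eq, of x] by simp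
        show "alpha1 a xb s * ((x - xb + (s - t) * r - AA a xb t s / 2) * H0 a xb r T y t x +
            AA a xb t s * (Hn 3 t x - Hn 2 t x)) = al1 s * K * H + al1 s * Af t * Hx + f1 s * H - f2 s * Hx"
          unfolding e1 e2 by (simp add: al1_def K_def H_def Hx_def f1_def f2_def algebra_simps) (simp add: field_simps)
      qed
      also have "\<dots> = I0 t * K * H + I0 t * Af t * Hx + I1 t * H - I2 t * Hx"
      proof (rule integral_unique)
        have t0: "0 \<le> t" "t \<le> T" using t by auto
        show "((\<lambda>s. al1 s * K * H + al1 s * Af t * Hx + f1 s * H - f2 s * Hx) has_integral
            I0 t * K * H + I0 t * Af t * Hx + I1 t * H - I2 t * Hx) {t..T}"
          unfolding I0_def I1_def I2_def
          by (intro has_integral_add has_integral_diff has_integral_mult_left int_has[OF c1 t0]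
              int_has[OF cf1 t0] int_has[OF cf2 t0])
      qed
      also have "\<dots> = U t x"
        by (simp add: U_def M_def Q_def K_def H_def Hx_def algebra_simps)
      finally show ?thesis .
    qed
    show "(\<forall>x. H0 a xb r T y t x = Hn 2 t x - Hn 1 t x) \<and> (\<forall>x. J1G0 a xb r T y t x = U t x)"
      using fun_cong[OF H0eq] J by blast
  qed
  have main: "\<And>t x. t \<in> {0<..<T} \<Longrightarrow>
        (\<lambda>s. J1G0 a xb r T y s x) differentiable (at t) \<and>
        (\<lambda>z. J1G0 a xb r T y t z) differentiable (at x) \<and>
        (\<lambda>z. pdx (J1G0 a xb r T y) t z) differentiable (at x) \<and>
        L0 a xb r (J1G0 a xb r T y) t x = - alpha1 a xb t * (x - xb) * H0 a xb r T y t x"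
  proof -
    fix t x :: real assume t: "t \<in> {0<..<T}"
    have At: "Af t > 0" using t Apos by auto
    have hx: "\<And>n z D. n \<le> 4 \<Longrightarrow> D = Hn (Suc n) t z \<Longrightarrow> ((\<lambda>z. Hn n t z) has_real_derivative D) (at z)"
      unfolding Hn_def using At xderiv by blast
    have Jfun: "(\<lambda>z. J1G0 a xb r T y t z) = U t" using key[OF t] by auto
    have H0x: "H0 a xb r T y t x = Hn 2 t x - Hn 1 t x" using key[OF t] by auto
    have dMx: "\<And>z. ((\<lambda>z. M t z) has_real_derivative I0 t) (at z)"
      unfolding M_def by (auto intro!: derivative_eq_intros)
    have dUx: "\<And>z. (U t has_real_derivative Ux t z) (at z)"
      unfolding U_def[abs_def]
      by (auto intro!: derivative_eq_intros dMx hx simp: Ux_def numeral_eq_Suc algebra_simps)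
    have dUxx: "\<And>z. (Ux t has_real_derivative Uxx t z) (at z)"
      unfolding Ux_def[abs_def]
      by (auto intro!: derivative_eq_intros dMx hx simp: Uxx_def numeral_eq_Suc algebra_simps)
    have px: "(\<lambda>z. pdx (J1G0 a xb r T y) t z) = Ux t"
    proof
      fix z show "pdx (J1G0 a xb r T y) t z = Ux t z"
        unfolding pdx_def Jfun by (rule DERIV_imp_deriv[OF dUx])
    qed
    have pxx: "pdxx (J1G0 a xb r T y) t x = Uxx t x"
      unfolding pdxx_def pdx_def[of "pdx (J1G0 a xb r T y)"] px by (rule DERIV_imp_deriv[OF dUxx])
    have dA: "(Af has_real_derivative - al0 t) (at t)" using Afd[OF t] .
    have dI0: "(I0 has_real_derivative - al1 t) (at t)" unfolding I0_def by (rule int_deriv[OF c1 t])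
    have dI1: "(I1 has_real_derivative - f1 t) (at t)" unfolding I1_def by (rule int_deriv[OF cf1 t])
    have dI2: "(I2 has_real_derivative - f2 t) (at t)" unfolding I2_def by (rule int_deriv[OF cf2 t])
    have ddd: "(dd has_real_derivative (- r + al0 t / 2)) (at t)"
      unfolding dd_def[abs_def] by (auto intro!: derivative_eq_intros dA)
    have dzz: "((\<lambda>s. x + dd s) has_real_derivative (- r + al0 t / 2)) (at t)"
      by (auto intro!: derivative_eq_intros ddd)
    have dHt: "\<And>n D. n \<le> 4 \<Longrightarrow> D = Hn (n+2) t x * (- al0 t) / 2 + Hn (Suc n) t x * (- r + al0 t / 2) \<Longrightarrow>
        ((\<lambda>s. Hn n s x) has_real_derivative D) (at t)"
      unfolding Hn_def using kk_deriv[OF dA dzz At] by blast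
    have dMt: "((\<lambda>s. M s x) has_real_derivative
        (- r + al0 t / 2) * I0 t + (x - xb - t*r - Af t/2) * (- al1 t) - f1 t) (at t)"
      unfolding M_def by (auto intro!: derivative_eq_intros dA dI0 dI1 simp: field_simps)
    have dQt: "(Q has_real_derivative (- al0 t) * I0 t + Af t * (- al1 t) + f2 t) (at t)"
      unfolding Q_def[abs_def] by (auto intro!: derivative_eq_intros dA dI0 dI2 simp: algebra_simps)
    define Ut where "Ut = ((- r + al0 t / 2) * I0 t + (x - xb - t*r - Af t/2) * (- al1 t) - f1 t) * (Hn 2 t x - Hn 1 t x)
       + M t x * ((Hn 4 t x * (- al0 t) / 2 + Hn 3 t x * (- r + al0 t / 2)) - (Hn 3 t x * (- al0 t) / 2 + Hn 2 t x * (- r + al0 t / 2)))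
       + ((- al0 t) * I0 t + Af t * (- al1 t) + f2 t) * (Hn 3 t x - Hn 2 t x)
       + Q t * ((Hn 5 t x * (- al0 t) / 2 + Hn 4 t x * (- r + al0 t / 2)) - (Hn 4 t x * (- al0 t) / 2 + Hn 3 t x * (- r + al0 t / 2)))"
    have dUt: "((\<lambda>s. U s x) has_real_derivative Ut) (at t)"
      unfolding U_def
      by (auto intro!: derivative_eq_intros dMt dQt dHt simp: Ut_def numeral_eq_Suc algebra_simps)
    have dJt: "((\<lambda>s. J1G0 a xb r T y s x) has_real_derivative Ut) (at t)"
      by (rule has_field_derivative_transform_within_open[OF dUt open_greaterThanLessThan t])
         (use key in auto)
    have pt: "pdt (J1G0 a xb r T y) t x = Ut" unfolding pdt_def by (rule DERIV_imp_deriv[OF dJt])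
    have pxx': "pdx (J1G0 a xb r T y) t x = Ux t x" using fun_cong[OF px, of x] by simp
    have d1: "(\<lambda>s. J1G0 a xb r T y s x) differentiable (at t)"
      unfolding real_differentiable_def using dJt by blast
    have d2: "(\<lambda>z. J1G0 a xb r T y t z) differentiable (at x)"
      unfolding real_differentiable_def Jfun using dUx by blast
    have d3: "(\<lambda>z. pdx (J1G0 a xb r T y) t z) differentiable (at x)"
      unfolding real_differentiable_def px using dUxx by blast
    have L: "L0 a xb r (J1G0 a xb r T y) t x = - alpha1 a xb t * (x - xb) * H0 a xb r T y t x"
      unfolding L0_def pxx pxx' pt H0x al0_def[symmetric] al1_def[symmetric]
      by (simp add: Ut_def Ux_def Uxx_def f1_def f2_def M_def field_simps)
    show "?thesis t x" using d1 d2 d3 L by blast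
  qed
  have climit: "\<And>g::real \<Rightarrow> real. continuous_on {0..T} g \<Longrightarrow> (g \<longlongrightarrow> g T) (at_left T)"
  proof -
    fix g :: "real \<Rightarrow> real" assume "continuous_on {0..T} g"
    then have "(g \<longlongrightarrow> g T) (at T within {0..T})" using T by (auto simp: continuous_on_def)
    then show "(g \<longlongrightarrow> g T) (at_left T)" using at_within_Icc_at_left[OF T] by simp
  qed
  have termc: "\<And>x. x \<noteq> y \<Longrightarrow> ((\<lambda>t. J1G0 a xb r T y t x) \<longlongrightarrow> 0) (at_left T)"
  proof -
    fix x assume xy: "x \<noteq> y"
    have ev: "eventually (\<lambda>t. t \<in> {0<..<T}) (at_left T)" by (rule eventually_at_left_real[OF T])
    have evJ: "eventually (\<lambda>t. U t x = J1G0 a xb r T y t x) (at_left T)"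
      using ev by eventually_elim (use key in auto)
    have ci0: "continuous_on {0..T} I0" unfolding I0_def by (rule int_cont[OF c1])
    have ci1: "continuous_on {0..T} I1" unfolding I1_def by (rule int_cont[OF cf1])
    have ci2: "continuous_on {0..T} I2" unfolding I2_def by (rule int_cont[OF cf2])
    have lM: "((\<lambda>t. M t x) \<longlongrightarrow> M T x) (at_left T)"
      by (rule climit) (unfold M_def, intro continuous_intros ci0 ci1 Afc, auto)
    have lQ: "(Q \<longlongrightarrow> Q T) (at_left T)"
      by (rule climit) (unfold Q_def[abs_def], intro continuous_intros ci0 ci2 Afc)
    have lA: "(Af \<longlongrightarrow> 0) (at_left T)" using climit[OF Afc] AT by simp
    have evA: "eventually (\<lambda>t. Af t > 0) (at_left T)"
      using ev by eventually_elim (use Apos in auto)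
    have lz: "((\<lambda>t. x + dd t) \<longlongrightarrow> x - y) (at_left T)"
    proof -
      have "((\<lambda>t. x + dd t) \<longlongrightarrow> x + dd T) (at_left T)"
        by (rule climit) (unfold dd_def, intro continuous_intros Afc, auto)
      then show ?thesis by (simp add: dd_def AT)
    qed
    have xy': "x - y \<noteq> 0" using xy by simp
    have lH: "\<And>n. n \<in> {1,2,3} \<Longrightarrow> ((\<lambda>t. Hn n t x) \<longlongrightarrow> 0) (at_left T)"
      unfolding Hn_def by (rule kk_lim[OF lA evA lz xy'])
    have "((\<lambda>t. U t x) \<longlongrightarrow> M T x * (0 - 0) + Q T * (0 - 0)) (at_left T)"
      unfolding U_def by (intro tendsto_intros lM lQ lH) auto
    then have "((\<lambda>t. U t x) \<longlongrightarrow> 0) (at_left T)" by simp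
    then show "((\<lambda>t. J1G0 a xb r T y t x) \<longlongrightarrow> 0) (at_left T)"
      using evJ by (rule Lim_transform_eventually)
  qed
  show ?thesis unfolding is_G1_def using main termc by blast
qed

end
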